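(* Let $n\ge1$, let $C$ be a finite set of points in convex position, and let the edges of $K_C$ be $2$-coloured. Suppose there are disjoint sets $L,R\subset C$ with $|L|=|R|=2n^2$ such that $L$ and $R$ can be separated by a line and all edges between $L$ and $R$ have the same colour. Then the colouring contains a monochromatic non-crossing copy of $L_{2n}$.
   Context: For a finite point set $C\subset\mathbb{R}^2$ in convex position (vertex set of a convex polygon), $K_C$ is the complete graph on $C$ with edges drawn as straight segments. A monochromatic non-crossing copy of a graph $G$ is an injective map $\phi:V(G)\to C$ such that all segments $\phi(x)\phi(y)$, $xy\in E(G)$, have the same colour and no two of them share a point other than a common endpoint. The ladder graph $L_{2n}$ consists of two paths $u_1\cdots u_n$ and $v_1\cdots v_n$ plus the edges $u_iv_i$, $i\in[n]$. *)

theory Defs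
  imports "HOL-Analysis.Analysis"
begin

type_synonym pt = "real \<times> real"

definition convex_position :: "pt set \<Rightarrow> bool" where
  "convex_position C \<longleftrightarrow> (\<forall>p\<in>C. p \<notin> convex hull (C - {p}))"

text \<open>Ladder graph L_{2n}: vertex (False,i) is u_i, vertex (True,i) is v_i, i in [n].\<close>
definition ladder_V :: "nat \<Rightarrow> (bool \<times> nat) set" where
  "ladder_V n = UNIV \<times> {1..n}"

definition ladder_E :: "nat \<Rightarrow> (bool \<times> nat) set set" where
  "ladder_E n = {{(b, i), (b, Suc i)} | b i. 1 \<le> i \<and> i < n}
              \<union> {{(False, i), (True, i)} | i. 1 \<le> i \<and> i \<le> n}"

text \<open>A colouring of K_C assigns a colour to each edge, i.e. to each 2-subset {p,q}
of C.\<close>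
definition mono_noncrossing_copy ::
  "(pt set \<Rightarrow> 'c) \<Rightarrow> pt set \<Rightarrow> 'v set \<Rightarrow> 'v set set \<Rightarrow> ('v \<Rightarrow> pt) \<Rightarrow> bool" where
  "mono_noncrossing_copy col C V E \<phi> \<longleftrightarrow>
     inj_on \<phi> V \<and> \<phi> ` V \<subseteq> C \<and>
     (\<exists>c. \<forall>e\<in>E. col (\<phi> ` e) = c) \<and>
     (\<forall>e\<in>E. \<forall>f\<in>E. e \<noteq> f \<longrightarrow>
        convex hull (\<phi> ` e) \<inter> convex hull (\<phi> ` f) \<subseteq> \<phi> ` (e \<inter> f))"

end

theory Submission
  imports Defs
begin

definition orient :: "pt \<Rightarrow> pt \<Rightarrow> pt \<Rightarrow> real" where
  "orient p q r = (fst q - fst p) * (snd r - snd p) - (snd q - snd p) * (fst r - fst p)"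

lemma orient_cyc: "orient p q r = orient q r p"
  unfolding orient_def by (simp add: algebra_simps)

lemma orient_swap: "orient p r q = - orient p q r"
  unfolding orient_def by (simp add: algebra_simps)

lemma orient_same: "orient a b a = 0" "orient a b b = 0" "orient a a b = 0"
  unfolding orient_def by (simp_all add: algebra_simps)

lemma orient_comb: "orient a b ((1 - u) *\<^sub>R c + u *\<^sub>R d) = (1-u) * orient a b c + u * orient a b d"
  unfolding orient_def by (simp add: algebra_simps)

lemma seg_param: "x \<in> convex hull {a,b} \<Longrightarrow> \<exists>u. 0 \<le> u \<and> u \<le> 1 \<and> x = (1 - u) *\<^sub>R a + u *\<^sub>R b"
  by (auto simp: segment_convex_hull[symmetric] closed_segment_def)

lemma on_line: "x \<in> convex hull {a,b} \<Longrightarrow> orient a b x = 0"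
  using seg_param[of x a b] orient_comb[of a b _ a b] orient_same by auto

lemma same_side:
  assumes "orient a b c > 0" "orient a b d > 0"
  shows "convex hull {a,b} \<inter> convex hull {c,d} = {}"
proof (rule ccontr)
  assume "\<not> ?thesis"
  then obtain x where x1: "x \<in> convex hull {a,b}" and x2: "x \<in> convex hull {c,d}" by blast
  from on_line[OF x1] have 0: "orient a b x = 0" .
  from seg_param[OF x2] obtain u where u: "0 \<le> u" "u \<le> 1" "x = (1 - u) *\<^sub>R c + u *\<^sub>R d" by blast
  have "orient a b x = (1-u) * orient a b c + u * orient a b d" using u orient_comb by simp
  moreover have "(1-u) * orient a b c \<ge> 0" "u * orient a b d \<ge> 0" using u assms by auto
  moreover have "(1-u) * orient a b c > 0 \<or> u * orient a b d > 0"
    using u assms by (cases "u = 0") auto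
  ultimately show False using 0 by linarith
qed

lemma same_side_neg:
  assumes "orient a b c < 0" "orient a b d < 0"
  shows "convex hull {a,b} \<inter> convex hull {c,d} = {}"
  using same_side[of b a c d] assms orient_cyc orient_swap
  by (metis insert_commute neg_0_less_iff_less)

lemma shared_end:
  assumes "orient a b c \<noteq> 0"
  shows "convex hull {a,b} \<inter> convex hull {a,c} \<subseteq> {a}"
proof
  fix x assume "x \<in> convex hull {a,b} \<inter> convex hull {a,c}"
  then have x1: "x \<in> convex hull {a,b}" and x2: "x \<in> convex hull {a,c}" by auto
  from on_line[OF x1] have 0: "orient a b x = 0" .
  from seg_param[OF x2] obtain u where u: "0 \<le> u" "u \<le> 1" "x = (1 - u) *\<^sub>R a + u *\<^sub>R c" by blast
  have "orient a b x = u * orient a b c" using u orient_comb[of a b u a c] orient_same by simp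
  with 0 assms have "u = 0" by simp
  with u show "x \<in> {a}" by simp
qed

lemma sep4:
  assumes "orient a b c > 0" "orient a b d > 0" "orient a c d > 0" "orient b c d > 0"
    and "w \<bullet> a < \<beta>" "w \<bullet> c < \<beta>" "w \<bullet> b > \<beta>" "w \<bullet> d > \<beta>"
  shows False
proof -
  define h where "h x = w \<bullet> x - \<beta>" for x
  have id: "orient b c d * h a - orient a c d * h b + orient a b d * h c - orient a b c * h d = 0"
    unfolding h_def orient_def by (simp add: inner_prod_def algebra_simps)
  have "orient b c d * h a < 0" using assms by (simp add: h_def mult_pos_neg)
  moreover have "orient a c d * h b > 0" using assms by (simp add: h_def)
  moreover have "orient a b d * h c < 0" using assms by (simp add: h_def mult_pos_neg)
  moreover have "orient a b c * h d > 0" using assms by (simp add: h_def)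
  ultimately show False using id by linarith
qed

lemma cp_sep:
  assumes "finite S" "convex_position S" "z \<in> S"
  shows "\<exists>w. \<forall>p\<in>S-{z}. w \<bullet> (p - z) > 0"
proof -
  have "z \<notin> convex hull (S - {z})" using assms unfolding convex_position_def by auto
  moreover have "closed (convex hull (S - {z}))"
    using assms(1) by (simp add: compact_imp_closed finite_imp_compact_convex_hull)
  ultimately obtain a b where ab: "inner a z < b" "\<forall>x\<in>convex hull (S - {z}). inner a x > b"
    using separating_hyperplane_closed_point[of "convex hull (S - {z})" z] by auto
  have "\<forall>p\<in>S-{z}. a \<bullet> (p - z) > 0"
  proof
    fix p assume "p \<in> S - {z}"
    then have "p \<in> convex hull (S - {z})" by (simp add: hull_inc)
    with ab show "a \<bullet> (p - z) > 0" by (auto simp: inner_diff_right)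
  qed
  then show ?thesis by blast
qed

lemma cp_noncol:
  assumes cp: "convex_position S" and w: "\<forall>p\<in>S-{z}. w \<bullet> (p - z) > 0"
    and "z \<in> S" "p \<in> S" "q \<in> S" "p \<noteq> z" "q \<noteq> z" "p \<noteq> q"
  shows "orient z p q \<noteq> 0"
proof
  assume col: "orient z p q = 0"
  define u where "u = p - z"
  define v where "v = q - z"
  have u0: "u \<noteq> 0" using assms by (simp add: u_def)
  have "\<exists>t. v = t *\<^sub>R u"
  proof (cases "fst u = 0")
    case True
    then have "snd u \<noteq> 0" using u0 by (simp add: prod_eq_iff)
    moreover have "fst u * snd v = snd u * fst v" using col by (simp add: orient_def u_def v_def)
    ultimately show ?thesis using True
      by (intro exI[of _ "snd v / snd u"]) (simp add: prod_eq_iff)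
  next
    case False
    moreover have "fst u * snd v = snd u * fst v" using col by (simp add: orient_def u_def v_def)
    ultimately show ?thesis
      by (intro exI[of _ "fst v / fst u"]) (simp add: prod_eq_iff field_simps)
  qed
  then obtain t where t: "v = t *\<^sub>R u" by blast
  have wu: "w \<bullet> u > 0" "w \<bullet> v > 0" using w assms by (auto simp: u_def v_def)
  have "w \<bullet> v = t * (w \<bullet> u)" using t by simp
  with wu have tpos: "t > 0" by (simp add: zero_less_mult_iff)
  have t1: "t \<noteq> 1" using t assms by (auto simp: u_def v_def)
  show False
  proof (cases "t < 1")
    case True
    have "q = (1 - t) *\<^sub>R z + t *\<^sub>R p" using t by (simp add: u_def v_def algebra_simps)
    then have "q \<in> convex hull {z, p}" using True tpos
      by (auto simp: segment_convex_hull[symmetric] closed_segment_def)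
    moreover have "convex hull {z,p} \<subseteq> convex hull (S - {q})"
      using assms by (intro hull_mono) auto
    ultimately show False using cp assms unfolding convex_position_def by blast
  next
    case False
    then have t1': "t > 1" using t1 by simp
    have "(1/t) *\<^sub>R v = u" using t tpos by simp
    then have "p = (1 - 1/t) *\<^sub>R z + (1/t) *\<^sub>R q"
      by (simp add: u_def v_def algebra_simps)
    then have "p \<in> convex hull {z, q}" using t1' tpos
      by (auto simp: segment_convex_hull[symmetric] closed_segment_def intro!: exI[of _ "1/t"])
    moreover have "convex hull {z,q} \<subseteq> convex hull (S - {p})"
      using assms by (intro hull_mono) auto
    ultimately show False using cp assms unfolding convex_position_def by blast
  qed
qed

lemma cp_trans:
  assumes w: "\<forall>p\<in>S-{z}. w \<bullet> (p - z) > 0"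
    and "p \<in> S - {z}" "q \<in> S - {z}" "r \<in> S - {z}"
    and "orient z p q > 0" "orient z q r > 0"
  shows "orient z p r > 0"
proof -
  have id: "orient z p q * (w \<bullet> (r - z)) + orient z q r * (w \<bullet> (p - z)) + orient z r p * (w \<bullet> (q - z)) = 0"
    unfolding orient_def by (simp add: inner_prod_def algebra_simps)
  have "orient z p q * (w \<bullet> (r - z)) > 0" "orient z q r * (w \<bullet> (p - z)) > 0" "w \<bullet> (q - z) > 0"
    using assms by auto
  with id have "orient z r p * (w \<bullet> (q - z)) < 0" by linarith
  then have "orient z r p < 0" using \<open>w \<bullet> (q - z) > 0\<close> by (simp add: mult_less_0_iff)
  then show ?thesis using orient_swap[of z p r] by simp
qed

lemma cp_ccw:
  assumes cp: "convex_position S"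
    and "z \<in> S" "p \<in> S" "q \<in> S" "r \<in> S" "q \<noteq> z" "q \<noteq> p" "q \<noteq> r"
    and pq: "orient z p q > 0" and qr: "orient z q r > 0" and pr: "orient z p r > 0"
  shows "orient p q r > 0"
proof (rule ccontr)
  assume "\<not> ?thesis"
  then have le: "orient p q r \<le> 0" by simp
  define D where "D = orient z p r"
  define l where "l = orient z q r / D"
  define m where "m = orient z p q / D"
  have Dp: "D > 0" using pr by (simp add: D_def)
  have idp: "orient p q r = orient z p q + orient z q r - orient z p r"
    unfolding orient_def by (simp add: algebra_simps)
  have lm: "l \<ge> 0" "m \<ge> 0" "l + m \<le> 1" using pq qr Dp le idp
    by (auto simp: l_def m_def D_def divide_simps)
  have idf: "D * fst q = (D - orient z q r - orient z p q) * fst z + orient z q r * fst p + orient z p q * fst r"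
    unfolding D_def orient_def by (simp add: algebra_simps)
  have ids: "D * snd q = (D - orient z q r - orient z p q) * snd z + orient z q r * snd p + orient z p q * snd r"
    unfolding D_def orient_def by (simp add: algebra_simps)
  have qeq: "q = (1 - l - m) *\<^sub>R z + l *\<^sub>R p + m *\<^sub>R r"
  proof (rule prod_eqI)
    have "fst q = ((D - orient z q r - orient z p q) * fst z + orient z q r * fst p + orient z p q * fst r) / D"
      using Dp idf by (metis less_irrefl nonzero_mult_div_cancel_left)
    moreover have "fst ((1 - l - m) *\<^sub>R z + l *\<^sub>R p + m *\<^sub>R r) = ((D - orient z q r - orient z p q) * fst z + orient z q r * fst p + orient z p q * fst r) / D"
      using Dp unfolding l_def m_def by (simp add: field_simps)
    ultimately show "fst q = fst ((1 - l - m) *\<^sub>R z + l *\<^sub>R p + m *\<^sub>R r)" by simp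
    have "snd q = ((D - orient z q r - orient z p q) * snd z + orient z q r * snd p + orient z p q * snd r) / D"
      using Dp ids by (metis less_irrefl nonzero_mult_div_cancel_left)
    moreover have "snd ((1 - l - m) *\<^sub>R z + l *\<^sub>R p + m *\<^sub>R r) = ((D - orient z q r - orient z p q) * snd z + orient z q r * snd p + orient z p q * snd r) / D"
      using Dp unfolding l_def m_def by (simp add: field_simps)
    ultimately show "snd q = snd ((1 - l - m) *\<^sub>R z + l *\<^sub>R p + m *\<^sub>R r)" by simp
  qed
  have "q \<in> convex hull {z,p,r}"
    unfolding convex_hull_3 using lm qeq
    by (intro CollectI exI[of _ "1 - l - m"] exI[of _ l] exI[of _ m]) auto
  moreover have "convex hull {z,p,r} \<subseteq> convex hull (S - {q})"
    using assms by (intro hull_mono) auto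
  ultimately show False using cp assms unfolding convex_position_def by blast
qed

lemma enum_exists:
  assumes fin: "finite S" and cp: "convex_position S" and zS: "z \<in> S"
  shows "\<exists>g. bij_betw g {0..<card S} S \<and> g 0 = z \<and>
    (\<forall>i j k. i < j \<longrightarrow> j < k \<longrightarrow> k < card S \<longrightarrow> orient (g i) (g j) (g k) > 0)"
proof -
  obtain w where w: "\<forall>p\<in>S-{z}. w \<bullet> (p - z) > 0" using cp_sep[OF fin cp zS] by blast
  define T where "T = S - {z}"
  have finT: "finite T" using fin by (simp add: T_def)
  define rk where "rk p = card {q\<in>T. orient z q p > 0}" for p
  have total: "orient z p q > 0 \<or> orient z q p > 0" if "p \<in> T" "q \<in> T" "p \<noteq> q" for p q
    using cp_noncol[OF cp w zS, of p q] that orient_swap[of z p q] by (auto simp: T_def)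
  have mono: "rk p < rk q" if "p \<in> T" "q \<in> T" "orient z p q > 0" for p q
  proof -
    have sub: "{x\<in>T. orient z x p > 0} \<subseteq> {x\<in>T. orient z x q > 0}"
    proof
      fix x assume "x \<in> {x\<in>T. orient z x p > 0}"
      then have x: "x \<in> T" "orient z x p > 0" by auto
      have "orient z x q > 0" using cp_trans[OF w, of x p q] x that by (simp add: T_def)
      then show "x \<in> {x\<in>T. orient z x q > 0}" using x by simp
    qed
    have pin: "p \<in> {x\<in>T. orient z x q > 0}" using that by simp
    have pnot: "p \<notin> {x\<in>T. orient z x p > 0}" using orient_same(2)[of z p] by simp
    have "{x\<in>T. orient z x p > 0} \<subset> {x\<in>T. orient z x q > 0}" using sub pin pnot by blast
    moreover have "finite {x\<in>T. orient z x q > 0}" using finT by simp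
    ultimately show ?thesis unfolding rk_def by (rule psubset_card_mono[rotated])
  qed
  have inj: "inj_on rk T"
  proof (rule inj_onI)
    fix p q assume "p \<in> T" "q \<in> T" "rk p = rk q"
    then show "p = q" using total mono by (metis less_irrefl)
  qed
  have rng: "rk ` T \<subseteq> {0..<card T}"
  proof
    fix y assume "y \<in> rk ` T"
    then obtain p where p: "p \<in> T" "y = rk p" by blast
    have "{x\<in>T. orient z x p > 0} \<subseteq> T - {p}" using orient_same(2)[of z p] by auto
    then have "rk p \<le> card (T - {p})" unfolding rk_def using finT by (intro card_mono) auto
    also have "\<dots> < card T"
    proof -
      have "card T > 0" using p finT card_gt_0_iff by blast
      then show ?thesis using p finT by simp
    qed
    finally show "y \<in> {0..<card T}" using p by simp
  qed
  have bijrk: "bij_betw rk T {0..<card T}"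
    unfolding bij_betw_def
    using inj rng card_subset_eq[OF finite_atLeastLessThan rng] card_image[OF inj] by simp
  define e where "e = inv_into T rk"
  have bije: "bij_betw e {0..<card T} T" unfolding e_def by (rule bij_betw_inv_into[OF bijrk])
  have rke: "rk (e k) = k" if "k < card T" for k
    unfolding e_def using bijrk that by (simp add: bij_betw_def f_inv_into_f)
  define g where "g k = (if k = 0 then z else e (k - 1))" for k
  have cS: "card S = Suc (card T)" using card_Suc_Diff1[OF fin zS] by (simp add: T_def)
  have gT: "g k \<in> T" if "0 < k" "k < card S" for k
    using bije that cS by (auto simp: g_def bij_betw_def)
  have zT: "z \<notin> T" by (simp add: T_def)
  have injg: "inj_on g {0..<card S}"
  proof (rule inj_onI)
    fix i j assume ij: "i \<in> {0..<card S}" "j \<in> {0..<card S}" "g i = g j"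
    show "i = j"
    proof (cases "i = 0 \<or> j = 0")
      case True
      then show ?thesis using ij gT zT by (metis atLeastLessThan_iff g_def neq0_conv)
    next
      case False
      then have "e (i - 1) = e (j - 1)" using ij by (simp add: g_def)
      moreover have "i - 1 \<in> {0..<card T}" "j - 1 \<in> {0..<card T}" using ij False cS by auto
      ultimately have "i - 1 = j - 1" using bije by (auto simp: bij_betw_def inj_on_def)
      then show ?thesis using False by linarith
    qed
  qed
  have gne: "g i \<noteq> g j" if "i < card S" "j < card S" "i \<noteq> j" for i j
    using injg that unfolding inj_on_def by (metis atLeastLessThan_iff zero_le)
  have img: "g ` {0..<card S} = S"
  proof
    show "g ` {0..<card S} \<subseteq> S" using gT zS by (auto simp: g_def T_def)
    show "S \<subseteq> g ` {0..<card S}"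
    proof
      fix p assume "p \<in> S"
      show "p \<in> g ` {0..<card S}"
      proof (cases "p = z")
        case True then show ?thesis by (auto simp: g_def cS intro!: image_eqI[of _ _ 0])
      next
        case False
        then have "p \<in> T" using \<open>p \<in> S\<close> by (simp add: T_def)
        then have "p \<in> e ` {0..<card T}" using bije by (simp add: bij_betw_def)
        then obtain k where "k < card T" "e k = p" by auto
        then show ?thesis using cS by (auto simp: g_def intro!: image_eqI[of _ _ "Suc k"])
      qed
    qed
  qed
  have ord: "orient z (g i) (g j) > 0" if "0 < i" "i < j" "j < card S" for i j
  proof (rule ccontr)
    assume neg: "\<not> ?thesis"
    have gi: "g i \<in> T" "g j \<in> T" using gT that by auto
    have "g i \<noteq> g j" using gne that by simp
    then have "orient z (g j) (g i) > 0" using total gi neg by blast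
    then have "rk (g j) < rk (g i)" using mono gi by blast
    moreover have "rk (g i) = i - 1" "rk (g j) = j - 1" using that cS rke by (auto simp: g_def)
    ultimately show False using that by simp
  qed
  have tri: "orient (g i) (g j) (g k) > 0" if "i < j" "j < k" "k < card S" for i j k
  proof (cases "i = 0")
    case True
    then show ?thesis using ord that by (simp add: g_def)
  next
    case False
    have inS: "g i \<in> S" "g j \<in> S" "g k \<in> S" using img that by auto
    have ne: "g j \<noteq> g i" "g j \<noteq> g k" using gne that by auto
    have "g j \<noteq> z" using gT[of j] that zT by auto
    then show ?thesis
      using cp_ccw[OF cp zS inS(1) inS(2) inS(3)] ne ord that False by auto
  qed
  show ?thesis
    using injg img tri by (intro exI[of _ g]) (auto simp: bij_betw_def g_def)
qed

lemma rot_closed: "(i::nat) < N \<Longrightarrow> m < N \<Longrightarrow> (i + m) mod N = (if i + m < N then i + m else i + m - N)"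
proof (cases "i + m < N")
  case False
  assume "i < N" "m < N"
  then have "i + m - N < N" by linarith
  moreover have "(i + m) mod N = (i + m - N) mod N" using False le_mod_geq by (simp add: not_less)
  ultimately show ?thesis using False by simp
qed simp

lemma rotate:
  fixes N m :: nat
  assumes bij: "bij_betw g {0..<N} S"
    and tri: "\<forall>i j k. i < j \<longrightarrow> j < k \<longrightarrow> k < N \<longrightarrow> orient (g i) (g j) (g k) > 0"
    and m: "m < N"
  shows "bij_betw (\<lambda>i. g ((i + m) mod N)) {0..<N} S \<and>
    (\<forall>i j k. i < j \<longrightarrow> j < k \<longrightarrow> k < N \<longrightarrow>
       orient (g ((i + m) mod N)) (g ((j + m) mod N)) (g ((k + m) mod N)) > 0)"
proof
  define \<rho> where "\<rho> i = (i + m) mod N" for i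
  have rc: "\<rho> i = (if i + m < N then i + m else i + m - N)" if "i < N" for i
    using rot_closed[OF that m] by (simp add: \<rho>_def)
  have inj: "inj_on \<rho> {0..<N}"
  proof (rule inj_onI)
    fix i j assume "i \<in> {0..<N}" "j \<in> {0..<N}" "\<rho> i = \<rho> j"
    then show "i = j" using rc[of i] rc[of j] by (auto split: if_splits)
  qed
  have sub: "\<rho> ` {0..<N} \<subseteq> {0..<N}" using m by (auto simp: \<rho>_def)
  have "\<rho> ` {0..<N} = {0..<N}" using endo_inj_surj[OF _ sub inj] by simp
  then have "bij_betw \<rho> {0..<N} {0..<N}" using inj by (simp add: bij_betw_def)
  from bij_betw_trans[OF this bij] show "bij_betw (\<lambda>i. g ((i + m) mod N)) {0..<N} S"
    by (simp add: \<rho>_def comp_def)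
  show "\<forall>i j k. i < j \<longrightarrow> j < k \<longrightarrow> k < N \<longrightarrow>
       orient (g ((i + m) mod N)) (g ((j + m) mod N)) (g ((k + m) mod N)) > 0"
  proof (intro allI impI)
    fix i j k assume ijk: "i < j" "j < k" "k < N"
    have e: "(i + m) mod N = \<rho> i" "(j + m) mod N = \<rho> j" "(k + m) mod N = \<rho> k" by (simp_all add: \<rho>_def)
    have ri: "\<rho> i = (if i + m < N then i + m else i + m - N)"
      and rj: "\<rho> j = (if j + m < N then j + m else j + m - N)"
      and rk: "\<rho> k = (if k + m < N then k + m else k + m - N)" using rc ijk by auto
    show "orient (g ((i + m) mod N)) (g ((j + m) mod N)) (g ((k + m) mod N)) > 0"
      unfolding e
    proof (cases "k + m < N")
      case True
      then show "orient (g (\<rho> i)) (g (\<rho> j)) (g (\<rho> k)) > 0"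
        using ri rj rk ijk tri by auto
    next
      case k: False
      show "orient (g (\<rho> i)) (g (\<rho> j)) (g (\<rho> k)) > 0"
      proof (cases "j + m < N")
        case True
        then have "\<rho> k < \<rho> i" "\<rho> i < \<rho> j" "\<rho> j < N" using ri rj rk ijk k m by auto
        then have "orient (g (\<rho> k)) (g (\<rho> i)) (g (\<rho> j)) > 0" using tri by blast
        then show ?thesis using orient_cyc by metis
      next
        case j: False
        show ?thesis
        proof (cases "i + m < N")
          case True
          then have "\<rho> j < \<rho> k" "\<rho> k < \<rho> i" "\<rho> i < N" using ri rj rk ijk k j m by auto
          then have "orient (g (\<rho> j)) (g (\<rho> k)) (g (\<rho> i)) > 0" using tri by blast
          then show ?thesis using orient_cyc by metis
        next
          case False
          then have "\<rho> i < \<rho> j" "\<rho> j < \<rho> k" "\<rho> k < N" using ri rj rk ijk k j m by auto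
          then show ?thesis using tri by blast
        qed
      qed
    qed
  qed
qed

definition chainP :: "(nat \<Rightarrow> nat \<Rightarrow> bool) \<Rightarrow> nat set \<Rightarrow> nat list \<Rightarrow> bool" where
  "chainP P I xs \<longleftrightarrow> xs \<noteq> [] \<and> set xs \<subseteq> I \<and>
     (\<forall>k. Suc k < length xs \<longrightarrow> xs!k < xs!Suc k \<and> P (xs!k) (xs!Suc k))"

lemma chain_incr:
  assumes "chainP P I xs" "i < j" "j < length xs"
  shows "xs!i < xs!j"
  using assms(2,3)
proof (induction j)
  case 0 then show ?case by simp
next
  case (Suc j)
  have "xs!j < xs!Suc j" using assms(1) Suc.prems by (simp add: chainP_def)
  then show ?case using Suc by (cases "i = j") auto
qed

lemma chain_len:
  assumes "chainP P I xs" "finite I"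
  shows "length xs \<le> card I"
proof -
  have "distinct xs"
    unfolding distinct_conv_nth
  proof (intro allI impI)
    fix i j assume "i < length xs" "j < length xs" "i \<noteq> j"
    then show "xs!i \<noteq> xs!j" using chain_incr[OF assms(1)]
      by (metis less_irrefl nat_neq_iff)
  qed
  then have "length xs = card (set xs)" by (simp add: distinct_card)
  also have "\<dots> \<le> card I" using assms by (intro card_mono) (auto simp: chainP_def)
  finally show ?thesis .
qed

lemma chain_snoc:
  assumes "chainP P I xs" "j \<in> I" "last xs < j" "P (last xs) j"
  shows "chainP P I (xs @ [j])"
  unfolding chainP_def
proof (intro conjI)
  show "xs @ [j] \<noteq> []" by simp
  show "set (xs @ [j]) \<subseteq> I" using assms by (auto simp: chainP_def)
  show "\<forall>k. Suc k < length (xs @ [j]) \<longrightarrow> (xs @ [j]) ! k < (xs @ [j]) ! Suc k \<and> P ((xs @ [j]) ! k) ((xs @ [j]) ! Suc k)"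
  proof (intro allI impI)
  fix k assume k: "Suc k < length (xs @ [j])"
  show "(xs @ [j]) ! k < (xs @ [j]) ! Suc k \<and> P ((xs @ [j]) ! k) ((xs @ [j]) ! Suc k)"
  proof (cases "Suc k < length xs")
    case True
    then show ?thesis using assms(1) by (simp add: chainP_def nth_append)
  next
    case False
    then have "Suc k = length xs" using k by simp
    moreover have "xs ! k = last xs" using assms(1) \<open>Suc k = length xs\<close>
      by (metis chainP_def diff_Suc_1 last_conv_nth)
    ultimately show ?thesis using assms by (simp add: nth_append)
  qed
  qed
qed

lemma chain_or_anti:
  fixes I :: "nat set" and P :: "nat \<Rightarrow> nat \<Rightarrow> bool" and n :: nat
  assumes fin: "finite I" and cI: "card I \<ge> 2 * n^2" and n1: "n \<ge> 1"
  shows "(\<exists>x. (\<forall>k<n. x k \<in> I) \<and> (\<forall>k. Suc k < n \<longrightarrow> x k < x (Suc k) \<and> P (x k) (x (Suc k))))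
       \<or> (\<exists>y. (\<forall>k<2*n. y k \<in> I) \<and> (\<forall>i j. i < j \<longrightarrow> j < 2*n \<longrightarrow> y i < y j \<and> \<not> P (y i) (y j)))"
proof -
  define CH where "CH i = {xs. chainP P I xs \<and> last xs = i}" for i
  define lng where "lng i = Max (length ` CH i)" for i
  have finCH: "finite (length ` CH i)" for i
  proof -
    have "length ` CH i \<subseteq> {0..card I}" using chain_len fin by (auto simp: CH_def)
    then show ?thesis using finite_subset by blast
  qed
  have neCH: "length ` CH i \<noteq> {}" if "i \<in> I" for i
  proof -
    have "[i] \<in> CH i" using that by (simp add: CH_def chainP_def)
    then show ?thesis by blast
  qed
  have l1: "lng i \<ge> 1" if "i \<in> I" for i
  proof -
    have "[i] \<in> CH i" using that by (simp add: CH_def chainP_def)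
    then have "length [i] \<in> length ` CH i" by (rule imageI)
    then have "length [i] \<le> lng i" unfolding lng_def using finCH by (intro Max_ge) auto
    then show ?thesis by simp
  qed
  have achieve: "\<exists>xs\<in>CH i. length xs = lng i" if "i \<in> I" for i
    using Max_in[OF finCH neCH[OF that]] unfolding lng_def by auto
  show ?thesis
  proof (cases "\<exists>i\<in>I. lng i \<ge> n")
    case True
    then obtain i xs where i: "i \<in> I" "lng i \<ge> n" and xs: "xs \<in> CH i" "length xs = lng i"
      using achieve by blast
    have ch: "chainP P I xs" using xs by (simp add: CH_def)
    have "(\<forall>k<n. xs!k \<in> I) \<and> (\<forall>k. Suc k < n \<longrightarrow> xs!k < xs!Suc k \<and> P (xs!k) (xs!Suc k))"
      using ch xs i unfolding chainP_def by (auto dest: nth_mem)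
    then show ?thesis by blast
  next
    case False
    then have lt: "lng i < n" if "i \<in> I" for i using that by (simp add: not_le)
    define K where "K v = {i\<in>I. lng i = v}" for v
    have "\<exists>v\<in>{1..<n}. card (K v) \<ge> 2 * n"
    proof (rule ccontr)
      assume "\<not> ?thesis"
      then have small: "card (K v) \<le> 2 * n - 1" if "v \<in> {1..<n}" for v using that by force
      have "I = (\<Union>v\<in>{1..<n}. K v)" using l1 lt by (auto simp: K_def)
      then have "card I \<le> (\<Sum>v\<in>{1..<n}. card (K v))" using card_UN_le[of "{1..<n}" K] by simp
      also have "\<dots> \<le> card {1..<n} * (2 * n - 1)" using sum_bounded_above[of "{1..<n}" "\<lambda>v. card (K v)"] small by simp
      also have "\<dots> = (n - 1) * (2 * n - 1)" by simp
      also have "\<dots> < 2 * n^2"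
      proof -
        obtain m where "n = Suc m" using n1 by (cases n) auto
        then show ?thesis by (simp add: power2_eq_square algebra_simps)
      qed
      finally show False using cI by simp
    qed
    then obtain v where v: "v \<in> {1..<n}" "card (K v) \<ge> 2 * n" by blast
    have anti: "\<not> P i j" if "i \<in> K v" "j \<in> K v" "i < j" for i j
    proof
      assume Pij: "P i j"
      have iI: "i \<in> I" "j \<in> I" using that by (auto simp: K_def)
      obtain xs where xs: "xs \<in> CH i" "length xs = lng i" using achieve[OF iI(1)] by blast
      have ch: "chainP P I xs" and lx: "last xs = i" using xs(1) by (auto simp: CH_def)
      have "chainP P I (xs @ [j])" using chain_snoc[OF ch iI(2)] lx that(3) Pij by simp
      then have "xs @ [j] \<in> CH j" by (simp add: CH_def)
      then have "length (xs @ [j]) \<in> length ` CH j" by (rule imageI)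
      then have "length (xs @ [j]) \<le> lng j" unfolding lng_def using finCH by (intro Max_ge) auto
      then have "lng i + 1 \<le> lng j" using xs by simp
      moreover have "lng i = v" "lng j = v" using that by (simp_all add: K_def)
      ultimately show False by simp
    qed
    define ys where "ys = sorted_list_of_set (K v)"
    have finK: "finite (K v)" using fin by (simp add: K_def)
    have ys: "sorted_wrt (<) ys" "set ys = K v" "length ys = card (K v)"
      using finK by (simp_all add: ys_def)
    have inK: "ys!k \<in> K v" if "k < 2 * n" for k
    proof -
      have "k < length ys" using ys(3) v(2) that by linarith
      then have "ys!k \<in> set ys" by (rule nth_mem)
      then show ?thesis using ys(2) by simp
    qed
    have "(\<forall>k<2*n. ys!k \<in> I) \<and> (\<forall>i j. i < j \<longrightarrow> j < 2*n \<longrightarrow> ys!i < ys!j \<and> \<not> P (ys!i) (ys!j))"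
    proof (intro conjI allI impI)
      fix k assume "k < 2 * n"
      then show "ys!k \<in> I" using inK by (simp add: K_def)
    next
      fix i j assume ij: "i < j" "j < 2 * n"
      then have jl: "j < length ys" using ys(3) v(2) by linarith
      have lt: "ys!i < ys!j" using sorted_wrt_nth_less[OF ys(1) ij(1) jl] .
      have "ys!i \<in> K v" "ys!j \<in> K v" using inK ij by auto
      then show "\<not> P (ys!i) (ys!j)" using anti lt by blast
      show "ys!i < ys!j" by (rule lt)
    qed
    then show ?thesis by blast
  qed
qed

lemma orient_perm:
  "orient a b c = orient b c a" "orient a b c = orient c a b"
  "orient a b c = - orient b a c" "orient a b c = - orient a c b" "orient a b c = - orient c b a"
  unfolding orient_def by (simp_all add: algebra_simps)

lemma nz3:
  fixes i j k N :: nat and f :: "nat \<Rightarrow> pt"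
  assumes ccw: "\<forall>i j k. i < j \<longrightarrow> j < k \<longrightarrow> k < N \<longrightarrow> orient (f i) (f j) (f k) > 0"
    and "i < N" "j < N" "k < N" "i \<noteq> j" "j \<noteq> k" "i \<noteq> k"
  shows "orient (f i) (f j) (f k) \<noteq> 0"
proof -
  have C: "orient (f a) (f b) (f c) > 0" if "a < b" "b < c" "c < N" for a b c
    using ccw that by blast
  have "i < j \<and> j < k \<or> i < k \<and> k < j \<or> j < i \<and> i < k \<or> j < k \<and> k < i \<or> k < i \<and> i < j \<or> k < j \<and> j < i"
    using assms by linarith
  then show ?thesis
  proof (elim disjE)
    assume "i < j \<and> j < k" then have "orient (f i) (f j) (f k) > 0" using C[of i j k] assms by auto
    then show ?thesis by simp
  next
    assume "i < k \<and> k < j" then have "orient (f i) (f k) (f j) > 0" using C[of i k j] assms by auto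
    then show ?thesis using orient_perm(4)[of "f i" "f j" "f k"] by linarith
  next
    assume "j < i \<and> i < k" then have "orient (f j) (f i) (f k) > 0" using C[of j i k] assms by auto
    then show ?thesis using orient_perm(3)[of "f i" "f j" "f k"] by linarith
  next
    assume "j < k \<and> k < i" then have "orient (f j) (f k) (f i) > 0" using C[of j k i] assms by auto
    then show ?thesis using orient_perm(1)[of "f i" "f j" "f k"] by linarith
  next
    assume "k < i \<and> i < j" then have "orient (f k) (f i) (f j) > 0" using C[of k i j] assms by auto
    then show ?thesis using orient_perm(2)[of "f i" "f j" "f k"] by linarith
  next
    assume "k < j \<and> j < i" then have "orient (f k) (f j) (f i) > 0" using C[of k j i] assms by auto
    then show ?thesis using orient_perm(5)[of "f i" "f j" "f k"] by linarith
  qed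
qed

lemma NC0:
  fixes p q p' q' N :: nat and f :: "nat \<Rightarrow> pt"
  assumes ccw: "\<forall>i j k. i < j \<longrightarrow> j < k \<longrightarrow> k < N \<longrightarrow> orient (f i) (f j) (f k) > 0"
    and pq: "p < q" "q < N" and pq': "p' < q'" "q' < N" and ne: "{p,q} \<noteq> {p',q'}"
    and ni1: "\<not> (p < p' \<and> p' < q \<and> q < q')" and ni2: "\<not> (p' < p \<and> p < q' \<and> q' < q)"
  shows "convex hull {f p, f q} \<inter> convex hull {f p', f q'} \<subseteq> f ` ({p,q} \<inter> {p',q'})"
proof -
  have C: "orient (f a) (f b) (f c) > 0" if "a < b" "b < c" "c < N" for a b c
    using ccw that by blast
  have sh: "convex hull {f a, f b} \<inter> convex hull {f a, f c} \<subseteq> {f a}"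
    if "a < N" "b < N" "c < N" "a \<noteq> b" "b \<noteq> c" "a \<noteq> c" for a b c
    using shared_end nz3[OF ccw that] by blast
  show ?thesis
  proof (cases "p = p' \<or> p = q' \<or> q = p' \<or> q = q'")
    case True
    then consider "p = p'" "q \<noteq> q'" | "q = q'" "p \<noteq> p'" | "p = q'" | "q = p'"
      using ne by blast
    then show ?thesis
    proof cases
      case 1
      then have "convex hull {f p, f q} \<inter> convex hull {f p, f q'} \<subseteq> {f p}"
        by (intro sh) (use pq pq' 1 in auto)
      then show ?thesis using 1 by auto
    next
      case 2
      then have "convex hull {f q, f p} \<inter> convex hull {f q, f p'} \<subseteq> {f q}"
        by (intro sh) (use pq pq' 2 in auto)
      then show ?thesis using 2 by (auto simp: insert_commute)
    next
      case 3
      then have "convex hull {f p, f q} \<inter> convex hull {f p, f p'} \<subseteq> {f p}"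
        by (intro sh) (use pq pq' 3 in auto)
      then show ?thesis using 3 by (auto simp: insert_commute)
    next
      case 4
      then have "convex hull {f q, f p} \<inter> convex hull {f q, f q'} \<subseteq> {f q}"
        by (intro sh) (use pq pq' 4 in auto)
      then show ?thesis using 4 by (auto simp: insert_commute)
    qed
  next
    case False
    then have d: "p \<noteq> p'" "p \<noteq> q'" "q \<noteq> p'" "q \<noteq> q'" by auto
    have "p < q \<and> q < p' \<or> q' < p \<or> (p < p' \<and> q' < q) \<or> (p' < p \<and> q < q')"
      using d pq pq' ni1 ni2 by linarith
    then have "convex hull {f p, f q} \<inter> convex hull {f p', f q'} = {}"
    proof (elim disjE)
      assume a: "p < q \<and> q < p'"
      then have "orient (f p) (f q) (f p') > 0" "orient (f p) (f q) (f q') > 0"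
        using C[of p q p'] C[of p q q'] pq pq' by auto
      then show ?thesis by (rule same_side)
    next
      assume a: "q' < p"
      then have "orient (f p') (f q') (f p) > 0" "orient (f p') (f q') (f q) > 0"
        using C[of p' q' p] C[of p' q' q] pq pq' by auto
      then show ?thesis using same_side by blast
    next
      assume a: "p < p' \<and> q' < q"
      then have "orient (f p) (f p') (f q') > 0" "orient (f p') (f q') (f q) > 0"
        using C[of p p' q'] C[of p' q' q] pq pq' by auto
      then have "orient (f p') (f q') (f p) > 0" "orient (f p') (f q') (f q) > 0"
        using orient_perm(1)[of "f p" "f p'" "f q'"] by linarith+
      then show ?thesis using same_side by blast
    next
      assume a: "p' < p \<and> q < q'"
      then have "orient (f p') (f p) (f q) > 0" "orient (f p) (f q) (f q') > 0"
        using C[of p' p q] C[of p q q'] pq pq' by auto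
      then have "orient (f p) (f q) (f p') > 0" "orient (f p) (f q) (f q') > 0"
        using orient_perm(1)[of "f p'" "f p" "f q"] by linarith+
      then show ?thesis by (rule same_side)
    qed
    then show ?thesis by simp
  qed
qed

definition pos :: "nat \<Rightarrow> bool \<times> nat \<Rightarrow> nat" where
  "pos n v = (if fst v then 2 * n - snd v else snd v - 1)"

lemma pos_inj: "inj_on (pos n) (ladder_V n)"
  unfolding inj_on_def ladder_V_def pos_def by auto

lemma pos_range: "pos n ` ladder_V n \<subseteq> {0..<2*n}"
  unfolding ladder_V_def pos_def by auto

lemma edges_good:
  assumes "e \<in> ladder_E n"
  shows "e \<subseteq> ladder_V n \<and> (\<exists>p q. p < q \<and> q < 2*n \<and> ((q = Suc p \<and> p \<noteq> n - 1) \<or> p + q = 2*n - 1) \<and> pos n ` e = {p, q})"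
  using assms unfolding ladder_E_def
proof (elim UnE CollectE exE conjE)
  fix b i assume e: "e = {(b, i), (b, Suc i)}" and i: "1 \<le> i" "i < n"
  have sub: "e \<subseteq> ladder_V n" using e i by (auto simp: ladder_V_def)
  show ?thesis
  proof (cases b)
    case True
    have "pos n ` e = {2*n - Suc i, 2*n - i}" using e True by (auto simp: pos_def)
    moreover have "2*n - i = Suc (2*n - Suc i)" "2*n - Suc i \<noteq> n - 1" "2*n - Suc i < 2*n - i" "2*n - i < 2*n"
      using i by auto
    ultimately show ?thesis using sub
      by (intro conjI exI[of _ "2*n - Suc i"] exI[of _ "2*n - i"]) simp_all
  next
    case False
    have "pos n ` e = {i - 1, i}" using e False by (auto simp: pos_def)
    moreover have "i = Suc (i - 1)" "i - 1 \<noteq> n - 1" "i - 1 < i" "i < 2*n"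
      using i by auto
    ultimately show ?thesis using sub
      by (intro conjI exI[of _ "i - 1"] exI[of _ i]) simp_all
  qed
next
  fix i assume e: "e = {(False, i), (True, i)}" and i: "1 \<le> i" "i \<le> n"
  have sub: "e \<subseteq> ladder_V n" using e i by (auto simp: ladder_V_def)
  have "pos n ` e = {i - 1, 2*n - i}" using e by (auto simp: pos_def)
  moreover have "i - 1 < 2*n - i" "2*n - i < 2*n" "(i - 1) + (2*n - i) = 2*n - 1"
    using i by auto
  ultimately show ?thesis using sub
    by (intro conjI exI[of _ "i - 1"] exI[of _ "2*n - i"]) simp_all
qed

lemma noninter:
  fixes p q p' q' n :: nat
  assumes "p < q" "(q = Suc p \<and> p \<noteq> n - 1) \<or> p + q = 2*n - 1"
    and "p' < q'" "(q' = Suc p' \<and> p' \<noteq> n - 1) \<or> p' + q' = 2*n - 1"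
  shows "\<not> (p < p' \<and> p' < q \<and> q < q')"
  using assms by (elim disjE conjE) linarith+

lemma ladder_copy:
  fixes f :: "nat \<Rightarrow> pt" and n :: nat and c :: bool and col :: "pt set \<Rightarrow> bool"
  assumes n1: "n \<ge> 1" and injf: "inj_on f {0..<2*n}" and fC: "f ` {0..<2*n} \<subseteq> C"
    and ccw: "\<forall>i j k. i < j \<longrightarrow> j < k \<longrightarrow> k < 2*n \<longrightarrow> orient (f i) (f j) (f k) > 0"
    and col1: "\<forall>a. Suc a < 2*n \<longrightarrow> a \<noteq> n - 1 \<longrightarrow> col {f a, f (Suc a)} = c"
    and col2: "\<forall>a<n. col {f a, f (2*n - 1 - a)} = c"
  shows "mono_noncrossing_copy col C (ladder_V n) (ladder_E n) (\<lambda>v. f (pos n v))"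
  unfolding mono_noncrossing_copy_def
proof (intro conjI)
  have img: "(\<lambda>v. f (pos n v)) ` X = f ` (pos n ` X)" for X by auto
  show "inj_on (\<lambda>v. f (pos n v)) (ladder_V n)"
    using comp_inj_on[OF pos_inj inj_on_subset[OF injf pos_range]] by (simp add: comp_def)
  show "(\<lambda>v. f (pos n v)) ` ladder_V n \<subseteq> C"
    using pos_range fC unfolding img by blast
  show "\<exists>c. \<forall>e\<in>ladder_E n. col ((\<lambda>v. f (pos n v)) ` e) = c"
  proof (intro exI ballI)
    fix e assume "e \<in> ladder_E n"
    then have "\<exists>p q. p < q \<and> q < 2*n \<and> ((q = Suc p \<and> p \<noteq> n - 1) \<or> p + q = 2*n - 1) \<and> pos n ` e = {p, q}"
      by (rule conjunct2[OF edges_good])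
    then obtain p q where "p < q \<and> q < 2*n \<and> ((q = Suc p \<and> p \<noteq> n - 1) \<or> p + q = 2*n - 1) \<and> pos n ` e = {p, q}"
      by (elim exE)
    then have pq: "p < q" "q < 2*n" "(q = Suc p \<and> p \<noteq> n - 1) \<or> p + q = 2*n - 1"
      "pos n ` e = {p, q}" by simp_all
    have ie: "(\<lambda>v. f (pos n v)) ` e = {f p, f q}" unfolding img pq(4) by simp
    show "col ((\<lambda>v. f (pos n v)) ` e) = c"
      using pq(3)
    proof
      assume "q = Suc p \<and> p \<noteq> n - 1"
      then show ?thesis using col1[rule_format, of p] pq(2) ie by simp
    next
      assume s: "p + q = 2*n - 1"
      then have "p < n" "q = 2*n - 1 - p" using pq(1) by linarith+
      then show ?thesis using col2[rule_format, of p] ie by simp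
    qed
  qed
  show "\<forall>e\<in>ladder_E n. \<forall>e'\<in>ladder_E n. e \<noteq> e' \<longrightarrow>
      convex hull ((\<lambda>v. f (pos n v)) ` e) \<inter> convex hull ((\<lambda>v. f (pos n v)) ` e')
        \<subseteq> (\<lambda>v. f (pos n v)) ` (e \<inter> e')"
  proof (intro ballI impI)
    fix e e' assume ee: "e \<in> ladder_E n" "e' \<in> ladder_E n" "e \<noteq> e'"
    have eg: "e \<subseteq> ladder_V n \<and> (\<exists>p q. p < q \<and> q < 2*n \<and> ((q = Suc p \<and> p \<noteq> n - 1) \<or> p + q = 2*n - 1) \<and> pos n ` e = {p, q})"
      by (rule edges_good[OF ee(1)])
    then have eV: "e \<subseteq> ladder_V n" by (rule conjunct1)
    from eg obtain p q where pq: "p < q" "q < 2*n" "(q = Suc p \<and> p \<noteq> n - 1) \<or> p + q = 2*n - 1"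
      "pos n ` e = {p, q}"
      by (elim conjE exE) (rule that; assumption)
    have eg': "e' \<subseteq> ladder_V n \<and> (\<exists>p q. p < q \<and> q < 2*n \<and> ((q = Suc p \<and> p \<noteq> n - 1) \<or> p + q = 2*n - 1) \<and> pos n ` e' = {p, q})"
      by (rule edges_good[OF ee(2)])
    then have eV': "e' \<subseteq> ladder_V n" by (rule conjunct1)
    from eg' obtain p' q' where pq': "p' < q'" "q' < 2*n" "(q' = Suc p' \<and> p' \<noteq> n - 1) \<or> p' + q' = 2*n - 1"
      "pos n ` e' = {p', q'}"
      by (elim conjE exE) (rule that; assumption)
    have ne: "{p, q} \<noteq> {p', q'}"
      using ee(3) inj_on_image_eq_iff[OF pos_inj eV eV'] pq(4) pq'(4) by simp
    have int: "pos n ` (e \<inter> e') = {p, q} \<inter> {p', q'}"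
      using inj_on_image_Int[OF pos_inj eV eV'] pq(4) pq'(4) by simp
    have ni1: "\<not> (p < p' \<and> p' < q \<and> q < q')" using noninter[OF pq(1,3) pq'(1,3)] .
    have ni2: "\<not> (p' < p \<and> p < q' \<and> q' < q)" using noninter[OF pq'(1,3) pq(1,3)] .
    have "convex hull {f p, f q} \<inter> convex hull {f p', f q'} \<subseteq> f ` ({p,q} \<inter> {p',q'})"
      by (rule NC0[OF ccw pq(1,2) pq'(1,2) ne ni1 ni2])
    then show "convex hull ((\<lambda>v. f (pos n v)) ` e) \<inter> convex hull ((\<lambda>v. f (pos n v)) ` e')
        \<subseteq> (\<lambda>v. f (pos n v)) ` (e \<inter> e')"
      unfolding img pq(4) pq'(4) int by simp
  qed
qed

lemma incr_from_succ:
  fixes x :: "nat \<Rightarrow> nat"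
  assumes "\<forall>k. Suc k < n \<longrightarrow> x k < x (Suc k)" "i < j" "j < n"
  shows "x i < x j"
  using assms(2,3)
proof (induction j)
  case 0 then show ?case by simp
next
  case (Suc j)
  have "x j < x (Suc j)" using assms(1) Suc.prems by simp
  then show ?case using Suc by (cases "i = j") auto
qed

lemma seq_copy:
  fixes g :: "nat \<Rightarrow> pt" and z :: "nat \<Rightarrow> nat" and n N :: nat and c :: bool and col :: "pt set \<Rightarrow> bool"
  assumes n1: "n \<ge> 1" and bij: "bij_betw g {0..<N} S" and SC: "S \<subseteq> C"
    and tri: "\<forall>i j k. i < j \<longrightarrow> j < k \<longrightarrow> k < N \<longrightarrow> orient (g i) (g j) (g k) > 0"
    and zinc: "\<forall>i j. i < j \<longrightarrow> j < 2*n \<longrightarrow> z i < z j" and zN: "\<forall>k<2*n. z k < N"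
    and col1: "\<forall>a. Suc a < 2*n \<longrightarrow> a \<noteq> n - 1 \<longrightarrow> col {g (z a), g (z (Suc a))} = c"
    and col2: "\<forall>a<n. col {g (z a), g (z (2*n - 1 - a))} = c"
  shows "\<exists>\<phi>. mono_noncrossing_copy col C (ladder_V n) (ladder_E n) \<phi>"
proof -
  define f where "f k = g (z k)" for k
  have injg: "inj_on g {0..<N}" using bij by (simp add: bij_betw_def)
  have injf: "inj_on f {0..<2*n}"
  proof (rule inj_onI)
    fix i j assume ij: "i \<in> {0..<2*n}" "j \<in> {0..<2*n}" "f i = f j"
    show "i = j"
    proof (rule ccontr)
      assume "i \<noteq> j"
      then have "z i \<noteq> z j" using zinc ij by (metis atLeastLessThan_iff less_irrefl nat_neq_iff)
      moreover have "z i \<in> {0..<N}" "z j \<in> {0..<N}" using zN ij by auto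
      ultimately have "g (z i) \<noteq> g (z j)" using injg by (meson inj_on_eq_iff)
      then show False using ij by (simp add: f_def)
    qed
  qed
  have fC: "f ` {0..<2*n} \<subseteq> C"
  proof
    fix y assume "y \<in> f ` {0..<2*n}"
    then obtain k where k: "k < 2*n" "y = g (z k)" by (auto simp: f_def)
    then have "z k \<in> {0..<N}" using zN by auto
    then have "g (z k) \<in> S" using bij by (auto simp: bij_betw_def)
    then show "y \<in> C" using k SC by auto
  qed
  have ccw: "\<forall>i j k. i < j \<longrightarrow> j < k \<longrightarrow> k < 2*n \<longrightarrow> orient (f i) (f j) (f k) > 0"
  proof (intro allI impI)
    fix i j k assume "i < j" "j < k" "k < 2*n"
    then have "z i < z j" "z j < z k" "z k < N" using zinc zN by auto
    then show "orient (f i) (f j) (f k) > 0" using tri by (simp add: f_def)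
  qed
  have "mono_noncrossing_copy col C (ladder_V n) (ladder_E n) (\<lambda>v. f (pos n v))"
    by (rule ladder_copy[OF n1 injf fC ccw, where c = c and col = col]) (use col1 col2 in \<open>simp_all add: f_def\<close>)
  then show ?thesis by blast
qed

lemma anti_case:
  fixes g :: "nat \<Rightarrow> pt" and n N :: nat and cc :: bool and col :: "pt set \<Rightarrow> bool"
  assumes n1: "n \<ge> 1" and bij: "bij_betw g {0..<N} S" and SC: "S \<subseteq> C"
    and tri: "\<forall>i j k. i < j \<longrightarrow> j < k \<longrightarrow> k < N \<longrightarrow> orient (g i) (g j) (g k) > 0"
    and IN: "I \<subseteq> {0..<N}"
    and y: "\<exists>y. (\<forall>k<2*n. y k \<in> I) \<and> (\<forall>i j. i < j \<longrightarrow> j < 2*n \<longrightarrow> y i < y j \<and> \<not> (col {g (y i), g (y j)} = cc))"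
  shows "\<exists>\<phi>. mono_noncrossing_copy col C (ladder_V n) (ladder_E n) \<phi>"
proof -
  obtain y where yI: "\<forall>k<2*n. y k \<in> I" and yP: "\<forall>i j. i < j \<longrightarrow> j < 2*n \<longrightarrow> y i < y j \<and> \<not> (col {g (y i), g (y j)} = cc)"
    using y by blast
  have ne: "col {g (y i), g (y j)} = (\<not> cc)" if "i < j" "j < 2*n" for i j
    using yP that by blast
  show ?thesis
  proof (rule seq_copy[OF n1 bij SC tri, where z = y and c = "\<not> cc"])
    show "\<forall>i j. i < j \<longrightarrow> j < 2*n \<longrightarrow> y i < y j" using yP by blast
    show "\<forall>k<2*n. y k < N" using yI IN by auto
    show "\<forall>a. Suc a < 2*n \<longrightarrow> a \<noteq> n - 1 \<longrightarrow> col {g (y a), g (y (Suc a))} = (\<not> cc)"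
      using ne by simp
    show "\<forall>a<n. col {g (y a), g (y (2*n - 1 - a))} = (\<not> cc)"
    proof (intro allI impI)
      fix a assume "a < n"
      then have "a < 2*n - 1 - a" "2*n - 1 - a < 2*n" by auto
      then show "col {g (y a), g (y (2*n - 1 - a))} = (\<not> cc)" using ne by blast
    qed
  qed
qed

lemma chain_case:
  fixes g :: "nat \<Rightarrow> pt" and n N M :: nat and cc :: bool and col :: "pt set \<Rightarrow> bool"
  assumes n1: "n \<ge> 1" and bij: "bij_betw g {0..<N} S" and SC: "S \<subseteq> C"
    and tri: "\<forall>i j k. i < j \<longrightarrow> j < k \<longrightarrow> k < N \<longrightarrow> orient (g i) (g j) (g k) > 0"
    and cross: "\<forall>i j. i < M \<longrightarrow> M \<le> j \<longrightarrow> j < N \<longrightarrow> col {g i, g j} = cc"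
    and x1: "\<exists>x. (\<forall>k<n. x k \<in> {0..<M}) \<and> (\<forall>k. Suc k < n \<longrightarrow> x k < x (Suc k) \<and> col {g (x k), g (x (Suc k))} = cc)"
    and x2: "\<exists>x. (\<forall>k<n. x k \<in> {M..<N}) \<and> (\<forall>k. Suc k < n \<longrightarrow> x k < x (Suc k) \<and> col {g (x k), g (x (Suc k))} = cc)"
  shows "\<exists>\<phi>. mono_noncrossing_copy col C (ladder_V n) (ladder_E n) \<phi>"
proof -
  obtain a1 where a1I: "\<forall>k<n. a1 k \<in> {0..<M}" and a1P: "\<forall>k. Suc k < n \<longrightarrow> a1 k < a1 (Suc k) \<and> col {g (a1 k), g (a1 (Suc k))} = cc"
    using x1 by blast
  obtain a2 where a2I: "\<forall>k<n. a2 k \<in> {M..<N}" and a2P: "\<forall>k. Suc k < n \<longrightarrow> a2 k < a2 (Suc k) \<and> col {g (a2 k), g (a2 (Suc k))} = cc"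
    using x2 by blast
  have inc1: "a1 i < a1 j" if "i < j" "j < n" for i j
    using incr_from_succ[of n a1 i j] a1P that by blast
  have inc2: "a2 i < a2 j" if "i < j" "j < n" for i j
    using incr_from_succ[of n a2 i j] a2P that by blast
  define z where "z k = (if k < n then a1 k else a2 (k - n))" for k
  show ?thesis
  proof (rule seq_copy[OF n1 bij SC tri, where z = z and c = cc])
    show "\<forall>i j. i < j \<longrightarrow> j < 2*n \<longrightarrow> z i < z j"
    proof (intro allI impI)
      fix i j assume ij: "i < j" "j < 2*n"
      show "z i < z j"
      proof (cases "j < n")
        case True
        then show ?thesis using inc1 ij by (simp add: z_def)
      next
        case jn: False
        show ?thesis
        proof (cases "i < n")
          case True
          then have "a1 i < M" "M \<le> a2 (j - n)" using a1I a2I ij jn by auto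
          then show ?thesis using True jn by (simp add: z_def)
        next
          case False
          then have "i - n < j - n" "j - n < n" using ij by auto
          then show ?thesis using inc2 False jn by (simp add: z_def)
        qed
      qed
    qed
    show "\<forall>k<2*n. z k < N"
    proof (intro allI impI)
      fix k assume "k < 2*n"
      show "z k < N"
      proof (cases "k < n")
        case True
        then have "a1 k < M" using a1I by auto
        moreover have "M \<le> a2 0" "a2 0 < N" using a2I n1 by auto
        ultimately show ?thesis using True by (simp add: z_def)
      next
        case False
        then have "k - n < n" using \<open>k < 2*n\<close> by auto
        then show ?thesis using a2I False by (auto simp: z_def)
      qed
    qed
    show "\<forall>a. Suc a < 2*n \<longrightarrow> a \<noteq> n - 1 \<longrightarrow> col {g (z a), g (z (Suc a))} = cc"
    proof (intro allI impI)
      fix a assume a: "Suc a < 2*n" "a \<noteq> n - 1"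
      show "col {g (z a), g (z (Suc a))} = cc"
      proof (cases "a < n")
        case True
        then have "Suc a < n" using a by auto
        then show ?thesis using a1P True by (simp add: z_def)
      next
        case False
        define b where "b = a - n"
        have b: "Suc b < n" "a - n = b" "Suc a - n = Suc b" using False a by (auto simp: b_def)
        have "col {g (a2 b), g (a2 (Suc b))} = cc" using a2P b by simp
        then show ?thesis using False b by (simp add: z_def)
      qed
    qed
    show "\<forall>a<n. col {g (z a), g (z (2*n - 1 - a))} = cc"
    proof (intro allI impI)
      fix a assume a: "a < n"
      have e: "2*n - 1 - a - n = n - 1 - a" "\<not> (2*n - 1 - a < n)" using a by auto
      have "a1 a < M" "M \<le> a2 (n - 1 - a)" "a2 (n - 1 - a) < N" using a1I a2I a by auto
      then have "col {g (a1 a), g (a2 (n - 1 - a))} = cc" using cross by blast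
      then show "col {g (z a), g (z (2*n - 1 - a))} = cc" using a e by (simp add: z_def)
    qed
  qed
qed

theorem lemmal:
  fixes n :: nat and C L R :: "pt set" and col :: "pt set \<Rightarrow> bool"
  assumes "n \<ge> 1"
    and "finite C" and "convex_position C"
    and "L \<subseteq> C" and "R \<subseteq> C" and "L \<inter> R = {}"
    and "card L = 2 * n^2" and "card R = 2 * n^2"
    and "\<exists>a b. a \<noteq> 0 \<and> (\<forall>p\<in>L. a \<bullet> p < b) \<and> (\<forall>q\<in>R. b < a \<bullet> q)"
    and "\<exists>c. \<forall>p\<in>L. \<forall>q\<in>R. col {p, q} = c"
  shows "\<exists>\<phi>. mono_noncrossing_copy col C (ladder_V n) (ladder_E n) \<phi>"
proof -
  have n1: "n \<ge> 1" using assms(1) .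
  define M where "M = 2 * n^2"
  define S where "S = L \<union> R"
  have finL: "finite L" and finR: "finite R" using assms(2,4,5) finite_subset by auto
  have finS: "finite S" using finL finR by (simp add: S_def)
  have SC: "S \<subseteq> C" using assms(4,5) by (simp add: S_def)
  have cS: "card S = 2 * M" using card_Un_disjoint[OF finL finR assms(6)] assms(7,8)
    by (simp add: S_def M_def)
  have cpS: "convex_position S"
    unfolding convex_position_def
  proof
    fix p assume "p \<in> S"
    have "convex hull (S - {p}) \<subseteq> convex hull (C - {p})" using SC by (intro hull_mono) auto
    moreover have "p \<notin> convex hull (C - {p})" using assms(3) \<open>p \<in> S\<close> SC
      unfolding convex_position_def by auto
    ultimately show "p \<notin> convex hull (S - {p})" by blast
  qed
  obtain c0 where c0: "\<forall>p\<in>L. \<forall>q\<in>R. col {p, q} = c0" using assms(10) by blast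
  obtain w \<beta> where sepL: "\<forall>p\<in>L. w \<bullet> p < \<beta>" and sepR: "\<forall>q\<in>R. \<beta> < w \<bullet> q"
    using assms(9) by blast
  have Mpos: "M > 0" using n1 by (simp add: M_def)
  have "L \<noteq> {}" using assms(7) Mpos by (auto simp: M_def)
  then obtain z where zL: "z \<in> L" by blast
  have zS: "z \<in> S" using zL by (simp add: S_def)
  define N where "N = card S"
  have NM: "N = 2 * M" using cS by (simp add: N_def)
  obtain g where g: "bij_betw g {0..<N} S" and g0: "g 0 = z"
    and tri: "\<forall>i j k. i < j \<longrightarrow> j < k \<longrightarrow> k < N \<longrightarrow> orient (g i) (g j) (g k) > 0"
    using enum_exists[OF finS cpS zS] unfolding N_def by blast
  have gS: "g i \<in> S" if "i < N" for i using g that by (auto simp: bij_betw_def)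
  have LR: "g i \<in> L \<or> g i \<in> R" if "i < N" for i using gS[OF that] by (simp add: S_def)
  have disj: "x \<in> L \<Longrightarrow> x \<notin> R" for x using assms(6) by blast
  have T: "orient (g a) (g b) (g c) > 0" if "a < b" "b < c" "c < N" for a b c
    using tri that by blast
  have nonalt: False if "i < j" "j < k" "k < l" "l < N" "g i \<in> L" "g j \<in> R" "g k \<in> L" "g l \<in> R" for i j k l
  proof (rule sep4[of "g i" "g j" "g k" "g l" w \<beta>])
    show "orient (g i) (g j) (g k) > 0" using T that by simp
    show "orient (g i) (g j) (g l) > 0" using T that by simp
    show "orient (g i) (g k) (g l) > 0" using T that by simp
    show "orient (g j) (g k) (g l) > 0" using T that by simp
    show "w \<bullet> g i < \<beta>" "w \<bullet> g k < \<beta>" using sepL that by auto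
    show "w \<bullet> g j > \<beta>" "w \<bullet> g l > \<beta>" using sepR that by auto
  qed
  define Q where "Q l \<longleftrightarrow> l < N \<and> g l \<in> L \<and> (\<exists>r<l. g r \<in> R)" for l
  define m where "m = (if \<exists>l. Q l then LEAST l. Q l else 0)"
  have NP: "N > 0" using NM Mpos by simp
  have mN: "m < N"
  proof (cases "\<exists>l. Q l")
    case True
    then have "Q (LEAST l. Q l)" by (rule LeastI_ex)
    then have "Q m" using True by (simp add: m_def)
    then show ?thesis unfolding Q_def by simp
  next
    case False then show ?thesis using NP by (simp add: m_def)
  qed
  define g' where "g' i = g ((i + m) mod N)" for i
  have rot: "bij_betw g' {0..<N} S \<and>
    (\<forall>i j k. i < j \<longrightarrow> j < k \<longrightarrow> k < N \<longrightarrow> orient (g' i) (g' j) (g' k) > 0)"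
    unfolding g'_def by (rule rotate[OF g tri mN])
  have g': "bij_betw g' {0..<N} S" using rot by blast
  have tri': "\<forall>i j k. i < j \<longrightarrow> j < k \<longrightarrow> k < N \<longrightarrow> orient (g' i) (g' j) (g' k) > 0"
    using rot by blast
  have order: "i < j" if "i < N" "j < N" "g' i \<in> L" "g' j \<in> R" for i j
  proof (cases "\<exists>l. Q l")
    case True
    have mL: "m = (LEAST l. Q l)" using True by (simp add: m_def)
    have Qm: "Q m" unfolding mL using True by (rule LeastI_ex)
    have minQ: "\<not> Q l" if "l < m" for l
      using that unfolding mL by (rule not_less_Least)
    obtain r where r: "r < m" "g r \<in> R" using Qm by (auto simp: Q_def)
    have Rbelow: "y < m" if "y < N" "g y \<in> R" for y
    proof (rule ccontr)
      assume "\<not> y < m"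
      moreover have "y \<noteq> m"
      proof
        assume "y = m"
        then have "g y \<in> L" using Qm by (simp add: Q_def)
        then show False using that(2) assms(6) by blast
      qed
      ultimately have my: "m < y" by simp
      have "r \<noteq> 0" using r g0 zL assms(6) by auto
      have gmL: "g m \<in> L" using Qm by (simp add: Q_def)
      show False by (rule nonalt[of 0 r m y]) (use r my that g0 zL gmL \<open>r \<noteq> 0\<close> in auto)
    qed
    have ri: "(i + m) mod N = (if i + m < N then i + m else i + m - N)"
      using rot_closed[OF \<open>i < N\<close> mN] .
    have rj: "(j + m) mod N = (if j + m < N then j + m else j + m - N)"
      using rot_closed[OF \<open>j < N\<close> mN] .
    have yN: "(j + m) mod N < N" using NP by simp
    have ylt: "(j + m) mod N < m" using Rbelow[OF yN] that(4) by (simp add: g'_def)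
    then have jm: "\<not> j + m < N" using rj by auto
    show ?thesis
    proof (cases "i + m < N")
      case True then show ?thesis using jm by linarith
    next
      case False
      define x where "x = i + m - N"
      have xm: "x < m" using that(1) False by (simp add: x_def)
      have gx: "g x \<in> L" using that(3) ri False by (simp add: g'_def x_def)
      have xN: "x < N" using xm mN by simp
      have "\<not> Q x" using minQ xm .
      then have noR: "\<forall>r<x. g r \<notin> R" using gx xN by (auto simp: Q_def)
      have gy: "g (j + m - N) \<in> R" using that(4) rj jm by (simp add: g'_def)
      have "j + m - N \<noteq> x" using gx gy assms(6) by blast
      moreover have "\<not> j + m - N < x" using noR gy by blast
      ultimately have "x < j + m - N" by simp
      then show ?thesis using False jm by (simp add: x_def)
    qed
  next
    case False
    then have m0: "m = 0" by (simp add: m_def)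
    have gi: "g i \<in> L" "g j \<in> R" using that m0 by (simp_all add: g'_def)
    have "\<not> Q i" using False by blast
    then have "\<not> j < i" using gi that by (auto simp: Q_def)
    moreover have "i \<noteq> j" using gi assms(6) by blast
    ultimately show ?thesis by simp
  qed
  have injg': "inj_on g' {0..<N}" using g' by (simp add: bij_betw_def)
  have pre: "card {i\<in>{0..<N}. g' i \<in> X} = card X" if "X \<subseteq> S" for X
  proof -
    have "g' ` {i\<in>{0..<N}. g' i \<in> X} = X"
    proof
      show "g' ` {i\<in>{0..<N}. g' i \<in> X} \<subseteq> X" by auto
      show "X \<subseteq> g' ` {i\<in>{0..<N}. g' i \<in> X}"
      proof
        fix x assume "x \<in> X"
        then have "x \<in> g' ` {0..<N}" using that g' by (auto simp: bij_betw_def)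
        then obtain i where "i < N" "g' i = x" by auto
        then show "x \<in> g' ` {i\<in>{0..<N}. g' i \<in> X}" using \<open>x \<in> X\<close> by auto
      qed
    qed
    moreover have "inj_on g' {i\<in>{0..<N}. g' i \<in> X}" by (rule inj_on_subset[OF injg']) auto
    ultimately show ?thesis using card_image by fastforce
  qed
  have cIL: "card {i\<in>{0..<N}. g' i \<in> L} = M" using pre[of L] assms(7) by (simp add: S_def M_def)
  have cIR: "card {i\<in>{0..<N}. g' i \<in> R} = M" using pre[of R] assms(8) by (simp add: S_def M_def)
  have g'S: "g' i \<in> S" if "i < N" for i using g' that by (auto simp: bij_betw_def)
  have Lpos: "g' i \<in> L \<longleftrightarrow> i < M" if "i < N" for i
  proof
    assume iL: "g' i \<in> L"
    show "i < M"
    proof (rule ccontr)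
      assume "\<not> i < M"
      have "{k\<in>{0..<N}. g' k \<in> R} \<subseteq> {Suc i..<N}"
      proof
        fix x assume "x \<in> {k\<in>{0..<N}. g' k \<in> R}"
        then have x: "x < N" "g' x \<in> R" by auto
        have "i < x" using order[OF that x(1) iL x(2)] .
        then show "x \<in> {Suc i..<N}" using x by simp
      qed
      then have "card {k\<in>{0..<N}. g' k \<in> R} \<le> card {Suc i..<N}" by (intro card_mono) auto
      moreover have "card {Suc i..<N} < M" using \<open>\<not> i < M\<close> NM Mpos by simp
      ultimately show False using cIR by linarith
    qed
  next
    assume iM: "i < M"
    show "g' i \<in> L"
    proof (rule ccontr)
      assume "g' i \<notin> L"
      then have iR: "g' i \<in> R" using g'S[OF that] by (simp add: S_def)
      have "{k\<in>{0..<N}. g' k \<in> L} \<subseteq> {0..<i}"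
      proof
        fix x assume "x \<in> {k\<in>{0..<N}. g' k \<in> L}"
        then have x: "x < N" "g' x \<in> L" by auto
        have "x < i" using order[OF x(1) that x(2) iR] .
        then show "x \<in> {0..<i}" by simp
      qed
      then have "card {k\<in>{0..<N}. g' k \<in> L} \<le> card {0..<i}" by (intro card_mono) auto
      then show False using cIL iM by simp
    qed
  qed
  have cross: "\<forall>i j. i < M \<longrightarrow> M \<le> j \<longrightarrow> j < N \<longrightarrow> col {g' i, g' j} = c0"
  proof (intro allI impI)
    fix i j assume ij: "i < M" "M \<le> j" "j < N"
    have "g' i \<in> L" using Lpos ij NM by simp
    moreover have "g' j \<notin> L" using Lpos ij by simp
    then have "g' j \<in> R" using g'S[OF ij(3)] by (simp add: S_def)
    ultimately show "col {g' i, g' j} = c0" using c0 by blast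
  qed
  define P where "P i j \<longleftrightarrow> col {g' i, g' j} = c0" for i j
  have c1: "card {0..<M} \<ge> 2 * n^2" by (simp add: M_def)
  have c2: "card {M..<N} \<ge> 2 * n^2" using NM by (simp add: M_def)
  have SC': "S \<subseteq> C" by (rule SC)
  note A1 = chain_or_anti[OF finite_atLeastLessThan c1 n1, of P]
  note A2 = chain_or_anti[OF finite_atLeastLessThan c2 n1, of P]
  show ?thesis
  proof (cases "\<exists>y. (\<forall>k<2*n. y k \<in> {0..<M}) \<and> (\<forall>i j. i < j \<longrightarrow> j < 2*n \<longrightarrow> y i < y j \<and> \<not> P (y i) (y j))")
    case True
    show ?thesis
      by (rule anti_case[OF n1 g' SC tri', where I = "{0..<M}" and cc = c0 and col = col]) (use True NM in \<open>auto simp: P_def\<close>)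
  next
    case F1: False
    show ?thesis
    proof (cases "\<exists>y. (\<forall>k<2*n. y k \<in> {M..<N}) \<and> (\<forall>i j. i < j \<longrightarrow> j < 2*n \<longrightarrow> y i < y j \<and> \<not> P (y i) (y j))")
      case True
      show ?thesis
        by (rule anti_case[OF n1 g' SC tri', where I = "{M..<N}" and cc = c0 and col = col]) (use True in \<open>auto simp: P_def\<close>)
    next
      case False
      have X1: "\<exists>x. (\<forall>k<n. x k \<in> {0..<M}) \<and> (\<forall>k. Suc k < n \<longrightarrow> x k < x (Suc k) \<and> P (x k) (x (Suc k)))"
        using A1 F1 by blast
      have X2: "\<exists>x. (\<forall>k<n. x k \<in> {M..<N}) \<and> (\<forall>k. Suc k < n \<longrightarrow> x k < x (Suc k) \<and> P (x k) (x (Suc k)))"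
        using A2 False by blast
      show ?thesis
        by (rule chain_case[OF n1 g' SC tri' cross]) (use X1 X2 in \<open>unfold P_def\<close>)
    qed
  qed
qed

end
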